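(* Let $\Sigma$ be a finite set of tokens, $c$ a context, and $M,M_1,M_2$ arbitrary language models. Then there exists a token $t\in\Sigma$ that is $\ge\sqrt{MAE_c(M_1,M_2)}$-exposed by $M$ over $M_1$ at $c$ or $\ge\sqrt{MAE_c(M_1,M_2)}$-exposed by $M$ over $M_2$ at $c$.
   Context: Let $n=|\Sigma|$. A context is a finite sequence of tokens from $\Sigma$. A language model $M$ assigns to every context $c$ and token $t\in\Sigma$ a probability $p_M(t\mid c)>0$, with $\sum_{t\in\Sigma}p_M(t\mid c)=1$. For $g:\Sigma\to\mathbb{R}_{>0}$, $GM(g(t)):=\exp\big(\tfrac1n\sum_{t\in\Sigma}\log g(t)\big)$. Typical probability: $tp_c(M):=GM(p_M(t\mid c))$; relative probability: $rp_M(t\mid c):=p_M(t\mid c)/tp_c(M)$. Typical probability ratio: $tpr_c(M_1,M_2):=GM\big(\tfrac{p_{M_1}(t\mid c)}{p_{M_2}(t\mid c)}\big)$. A token $t$ is $\alpha$-exposed by $M_1$ over $M_2$ at $c$ if $\frac{p_{M_1}(t\mid c)}{p_{M_2}(t\mid c)\cdot tpr_c(M_1,M_2)}=\alpha$; it is $\ge\alpha$-exposed if it is $\beta$-exposed for some $\beta\ge\alpha$. Mean absolute exposure: $MAE_c(M_1,M_2):=GM\Big(\max\Big(\tfrac{rp_{M_1}(t\mid c)}{rp_{M_2}(t\mid c)},\tfrac{rp_{M_2}(t\mid c)}{rp_{M_1}(t\mid c)}\Big)\Big)$. *)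

theory Defs
  imports Complex_Main
begin

text \<open>Tokens: a finite type 'a (so Sigma = UNIV, nonempty). Contexts: token lists.
A language model is a function M c t = p_M(t | c).\<close>

definition language_model :: "('a::finite list \<Rightarrow> 'a \<Rightarrow> real) \<Rightarrow> bool" where
  "language_model M \<longleftrightarrow> (\<forall>c t. M c t > 0) \<and> (\<forall>c. (\<Sum>t\<in>UNIV. M c t) = 1)"

definition GM :: "('a::finite \<Rightarrow> real) \<Rightarrow> real" where
  "GM g = exp ((1 / real (card (UNIV :: 'a set))) * (\<Sum>t\<in>UNIV. ln (g t)))"

definition tp :: "'a::finite list \<Rightarrow> ('a list \<Rightarrow> 'a \<Rightarrow> real) \<Rightarrow> real" where
  "tp c M = GM (\<lambda>t. M c t)"

definition rp :: "('a::finite list \<Rightarrow> 'a \<Rightarrow> real) \<Rightarrow> 'a \<Rightarrow> 'a list \<Rightarrow> real" where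
  "rp M t c = M c t / tp c M"

definition tpr :: "'a::finite list \<Rightarrow> ('a list \<Rightarrow> 'a \<Rightarrow> real) \<Rightarrow> ('a list \<Rightarrow> 'a \<Rightarrow> real) \<Rightarrow> real" where
  "tpr c M1 M2 = GM (\<lambda>t. M1 c t / M2 c t)"

definition exposed :: "real \<Rightarrow> 'a::finite \<Rightarrow> ('a list \<Rightarrow> 'a \<Rightarrow> real) \<Rightarrow> ('a list \<Rightarrow> 'a \<Rightarrow> real) \<Rightarrow> 'a list \<Rightarrow> bool" where
  "exposed \<alpha> t M1 M2 c \<longleftrightarrow> M1 c t / (M2 c t * tpr c M1 M2) = \<alpha>"

definition ge_exposed :: "real \<Rightarrow> 'a::finite \<Rightarrow> ('a list \<Rightarrow> 'a \<Rightarrow> real) \<Rightarrow> ('a list \<Rightarrow> 'a \<Rightarrow> real) \<Rightarrow> 'a list \<Rightarrow> bool" where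
  "ge_exposed \<alpha> t M1 M2 c \<longleftrightarrow> (\<exists>\<beta>\<ge>\<alpha>. exposed \<beta> t M1 M2 c)"

definition MAE :: "'a::finite list \<Rightarrow> ('a list \<Rightarrow> 'a \<Rightarrow> real) \<Rightarrow> ('a list \<Rightarrow> 'a \<Rightarrow> real) \<Rightarrow> real" where
  "MAE c M1 M2 = GM (\<lambda>t. max (rp M1 t c / rp M2 t c) (rp M2 t c / rp M1 t c))"

end

theory Submission
  imports Defs
begin

lemma GM_exp: fixes g :: "'a::finite \<Rightarrow> real" shows "GM g = exp ((\<Sum>t\<in>UNIV. ln (g t)) / real (card (UNIV :: 'a::finite set)))"
  unfolding GM_def by simp

theorem theorem1:
  fixes M M1 M2 :: "'a::finite list \<Rightarrow> 'a \<Rightarrow> real" and c :: "'a list"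
  assumes "language_model M" and "language_model M1" and "language_model M2"
  shows "\<exists>t. ge_exposed (sqrt (MAE c M1 M2)) t M M1 c \<or> ge_exposed (sqrt (MAE c M1 M2)) t M M2 c"
proof -
  define n where "n = real (card (UNIV :: 'a set))"
  have n: "n > 0" unfolding n_def by (simp add: finite_UNIV_card_ge_0)
  have p: "\<And>t. M c t > 0" "\<And>t. M1 c t > 0" "\<And>t. M2 c t > 0"
    using assms unfolding language_model_def by auto
  define P where "P t = ln (M c t)" for t
  define Q1 where "Q1 t = ln (M1 c t)" for t
  define Q2 where "Q2 t = ln (M2 c t)" for t
  define A where "A t = P t - (\<Sum>s\<in>UNIV. P s) / n" for t
  define B1 where "B1 t = Q1 t - (\<Sum>s\<in>UNIV. Q1 s) / n" for t
  define B2 where "B2 t = Q2 t - (\<Sum>s\<in>UNIV. Q2 s) / n" for t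
  have sumz: "(\<Sum>t\<in>UNIV. A t) = 0" "(\<Sum>t\<in>UNIV. B1 t) = 0" "(\<Sum>t\<in>UNIV. B2 t) = 0"
    unfolding A_def B1_def B2_def using n by (simp_all add: sum_subtractf n_def)
  have tpr1: "tpr c M M1 = exp ((\<Sum>s\<in>UNIV. P s) / n - (\<Sum>s\<in>UNIV. Q1 s) / n)"
  proof -
    have "ln (M c t / M1 c t) = P t - Q1 t" for t unfolding P_def Q1_def using p(1)[of t] p(2)[of t] by (simp add: ln_div)
    thus ?thesis unfolding tpr_def GM_exp n_def[symmetric] by (simp add: sum_subtractf diff_divide_distrib)
  qed
  have tpr2: "tpr c M M2 = exp ((\<Sum>s\<in>UNIV. P s) / n - (\<Sum>s\<in>UNIV. Q2 s) / n)"
  proof -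
    have "ln (M c t / M2 c t) = P t - Q2 t" for t unfolding P_def Q2_def using p(1)[of t] p(3)[of t] by (simp add: ln_div)
    thus ?thesis unfolding tpr_def GM_exp n_def[symmetric] by (simp add: sum_subtractf diff_divide_distrib)
  qed
  have e1: "M c t / (M1 c t * tpr c M M1) = exp (A t - B1 t)" for t
    unfolding tpr1 A_def B1_def using p
    by (simp add: P_def Q1_def exp_diff)
  have e2: "M c t / (M2 c t * tpr c M M2) = exp (A t - B2 t)" for t
    unfolding tpr2 A_def B2_def using p
    by (simp add: P_def Q2_def exp_diff)
  have rp1: "rp M1 t c = exp (B1 t)" for t
    unfolding rp_def tp_def GM_exp n_def[symmetric] B1_def Q1_def using p by (simp add: exp_diff)
  have rp2: "rp M2 t c = exp (B2 t)" for t
    unfolding rp_def tp_def GM_exp n_def[symmetric] B2_def Q2_def using p by (simp add: exp_diff)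
  have mx: "max (exp x / exp y) (exp y / exp x) = exp \<bar>x - y\<bar>" for x y :: real
    by (simp add: exp_diff[symmetric] abs_if max_def)
  define D where "D = (\<Sum>t\<in>UNIV. \<bar>B1 t - B2 t\<bar>) / n"
  have mae: "MAE c M1 M2 = exp D"
    unfolding MAE_def GM_exp n_def[symmetric] rp1 rp2 mx D_def by simp
  have sq: "sqrt (MAE c M1 M2) = exp (D / 2)"
  proof -
    have "exp D = (exp (D/2))^2" by (simp add: power2_eq_square exp_add[symmetric])
    thus ?thesis unfolding mae by simp
  qed
  have eq: "max (A t - B1 t) (A t - B2 t) = A t - (B1 t + B2 t)/2 + \<bar>B1 t - B2 t\<bar>/2" for t
    by (simp add: max_def abs_if field_simps)
  have sumf: "(\<Sum>t\<in>UNIV. max (A t - B1 t) (A t - B2 t)) = n * (D / 2)"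
    unfolding eq D_def using n sumz
    by (simp add: sum.distrib sum_subtractf sum_divide_distrib[symmetric])
  have "\<exists>t. max (A t - B1 t) (A t - B2 t) \<ge> D / 2"
  proof (rule ccontr)
    assume "\<not> ?thesis"
    hence lt: "\<And>t. max (A t - B1 t) (A t - B2 t) < D / 2" by (meson not_le)
    have "(\<Sum>t\<in>UNIV. max (A t - B1 t) (A t - B2 t)) < (\<Sum>t\<in>(UNIV::'a set). D / 2)"
      by (intro sum_strict_mono lt) auto
    thus False unfolding sumf n_def by simp
  qed
  then obtain t where t: "max (A t - B1 t) (A t - B2 t) \<ge> D / 2" by blast
  show ?thesis
  proof (cases "A t - B1 t \<ge> D / 2")
    case True
    hence "ge_exposed (sqrt (MAE c M1 M2)) t M M1 c"
      unfolding ge_exposed_def exposed_def sq e1 by auto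
    thus ?thesis by blast
  next
    case False
    hence "A t - B2 t \<ge> D / 2" using t by (simp add: max_def split: if_splits)
    hence "ge_exposed (sqrt (MAE c M1 M2)) t M M2 c"
      unfolding ge_exposed_def exposed_def sq e2 by auto
    thus ?thesis by blast
  qed
qed

end
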